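(* Let $\gamma\in\mathbb{Z}[\mathrm{i}]$ with $|\gamma|>1$, let $(\gamma,D)$ be an integral numeration system, and let $r\ge2$ be a real number such that $D\subseteq D_\gamma:=\{d\in\mathbb{Z}[\mathrm{i}]:|d|\le r|\gamma|\}$. If $n\ge1$ is an integer and $z\in\mathbb{Z}[\mathrm{i}]$ satisfies $|z|\le r|\gamma|^n$, then there exists a word $w=d_{n-1}\cdots d_0\in D_\gamma^n$ with $[w]_\gamma=z$.
   Context: For a finite $D\subset\mathbb{Z}[\mathrm{i}]$ containing $0$, a word $w=w_{n-1}\cdots w_0$ over $D$ has value $[w]_\gamma=\sum_{j=0}^{n-1}w_j\gamma^j$. $(\gamma,D)$ is an integral numeration system if every Gaussian integer has a unique such expansion (up to leading zeros). *)

theory Defs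
  imports "HOL-Analysis.Analysis"
begin

definition gauss_ints :: "complex set" where
  "gauss_ints = {z. Re z \<in> \<int> \<and> Im z \<in> \<int>}"

text \<open>A word w = w_{n-1} ... w_0 is represented by the list [w_0, w_1, ..., w_{n-1}],
  i.e. the list entry at index j is the digit w_j of weight gamma^j.\<close>
definition word_val :: "complex \<Rightarrow> complex list \<Rightarrow> complex" where
  "word_val \<gamma> w = (\<Sum>j<length w. w ! j * \<gamma> ^ j)"

definition digit :: "complex list \<Rightarrow> nat \<Rightarrow> complex" where
  "digit w j = (if j < length w then w ! j else 0)"

definition integral_numeration_system :: "complex \<Rightarrow> complex set \<Rightarrow> bool" where
  "integral_numeration_system \<gamma> D \<longleftrightarrow>
     finite D \<and> D \<subseteq> gauss_ints \<and> 0 \<in> D \<and>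
     (\<forall>z\<in>gauss_ints. \<exists>w. set w \<subseteq> D \<and> word_val \<gamma> w = z) \<and>
     (\<forall>v w. set v \<subseteq> D \<longrightarrow> set w \<subseteq> D \<longrightarrow> word_val \<gamma> v = word_val \<gamma> w
        \<longrightarrow> (\<forall>j. digit v j = digit w j))"

definition D_gamma :: "real \<Rightarrow> complex \<Rightarrow> complex set" where
  "D_gamma r \<gamma> = {d \<in> gauss_ints. cmod d \<le> r * cmod \<gamma>}"

end

theory Submission
  imports Defs
begin

definition trz :: "real \<Rightarrow> real" where
  "trz x = (if x \<ge> 0 then of_int (floor x) else of_int (ceiling x))"

lemma trz_int: "trz x \<in> \<int>"
  unfolding trz_def by auto

lemma trz_abs: "\<bar>trz x\<bar> \<le> \<bar>x\<bar>"
proof (cases "x \<ge> 0")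
  case True thus ?thesis unfolding trz_def by simp
next
  case False
  hence "ceiling x \<le> 0" by (simp add: ceiling_le_zero)
  hence "real_of_int (ceiling x) \<le> 0" by simp
  moreover have "x \<le> real_of_int (ceiling x)" by (rule le_of_int_ceiling)
  ultimately show ?thesis using False unfolding trz_def by simp
qed

lemma trz_diff: "\<bar>x - trz x\<bar> \<le> 1"
  unfolding trz_def by (auto simp: abs_if) (linarith+)

lemma trz_sq: "(trz x)^2 \<le> x^2"
  using trz_abs[of x] by (simp add: abs_le_square_iff)

lemma trz_diff_sq: "(x - trz x)^2 \<le> 1"
  using trz_diff[of x] by (metis abs_le_square_iff abs_one one_power2)

lemma gauss_mult: "a \<in> gauss_ints \<Longrightarrow> b \<in> gauss_ints \<Longrightarrow> a * b \<in> gauss_ints"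
  unfolding gauss_ints_def by (auto intro: Ints_mult Ints_diff Ints_add)

lemma gauss_diff: "a \<in> gauss_ints \<Longrightarrow> b \<in> gauss_ints \<Longrightarrow> a - b \<in> gauss_ints"
  unfolding gauss_ints_def by (auto intro: Ints_diff)

lemma word_val_Cons: "word_val g (d # w) = d + g * word_val g w"
  unfolding word_val_def
  by (simp add: sum.lessThan_Suc_shift sum_distrib_left mult_ac del: sum.lessThan_Suc)

lemma main:
  fixes \<gamma> :: complex and r :: real
  assumes g: "\<gamma> \<in> gauss_ints" and g1: "cmod \<gamma> > 1" and r: "r \<ge> 2" and n: "n \<ge> 1"
  shows "\<forall>z. z \<in> gauss_ints \<longrightarrow> cmod z \<le> r * cmod \<gamma> ^ n \<longrightarrow>
     (\<exists>w. length w = n \<and> set w \<subseteq> D_gamma r \<gamma> \<and> word_val \<gamma> w = z)"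
  using n
proof (induct n rule: dec_induct)
  case base
  show ?case
  proof (intro allI impI)
    fix z assume "z \<in> gauss_ints" "cmod z \<le> r * cmod \<gamma> ^ 1"
    then show "\<exists>w. length w = 1 \<and> set w \<subseteq> D_gamma r \<gamma> \<and> word_val \<gamma> w = z"
      by (intro exI[of _ "[z]"]) (simp add: D_gamma_def word_val_def)
  qed
next
  case (step n)
  show ?case
  proof (intro allI impI)
    fix z assume z: "z \<in> gauss_ints" and zb: "cmod z \<le> r * cmod \<gamma> ^ Suc n"
    have g0: "\<gamma> \<noteq> 0" using g1 by auto
    define t where "t = z / \<gamma>"
    define q where "q = Complex (trz (Re t)) (trz (Im t))"
    define d where "d = z - q * \<gamma>"
    have qg: "q \<in> gauss_ints" unfolding q_def gauss_ints_def by (simp add: trz_int)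
    have dg: "d \<in> gauss_ints" unfolding d_def using z qg g by (intro gauss_diff gauss_mult)
    have "cmod q \<le> cmod t"
      unfolding q_def cmod_def using trz_sq[of "Re t"] trz_sq[of "Im t"]
      by (intro real_sqrt_le_mono) simp
    also have "cmod t = cmod z / cmod \<gamma>" unfolding t_def by (simp add: norm_divide)
    also have "\<dots> \<le> r * cmod \<gamma> ^ n" using zb g1
      by (subst pos_divide_le_eq) (auto simp: mult_ac)
    finally have qb: "cmod q \<le> r * cmod \<gamma> ^ n" .
    have "cmod (t - q) \<le> sqrt 2"
      unfolding q_def cmod_def using trz_diff_sq[of "Re t"] trz_diff_sq[of "Im t"]
      by (intro real_sqrt_le_mono) simp
    also have "sqrt 2 \<le> r" using r
      by (smt (verit) real_sqrt_le_iff real_sqrt_four)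
    finally have tq: "cmod (t - q) \<le> r" .
    have "d = (t - q) * \<gamma>" unfolding d_def t_def using g0 by (simp add: field_simps)
    hence "cmod d = cmod (t - q) * cmod \<gamma>" by (simp add: norm_mult)
    also have "\<dots> \<le> r * cmod \<gamma>" using tq by (simp add: mult_right_mono)
    finally have db: "d \<in> D_gamma r \<gamma>" using dg by (simp add: D_gamma_def)
    obtain w where w: "length w = n" "set w \<subseteq> D_gamma r \<gamma>" "word_val \<gamma> w = q"
      using step(3) qg qb by blast
    show "\<exists>w. length w = Suc n \<and> set w \<subseteq> D_gamma r \<gamma> \<and> word_val \<gamma> w = z"
      using w db by (intro exI[of _ "d # w"]) (simp add: word_val_Cons d_def)
  qed
qed

theorem lemma2p8:
  fixes \<gamma> z :: complex and D :: "complex set" and r :: real and n :: nat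
  assumes "\<gamma> \<in> gauss_ints" and "cmod \<gamma> > 1"
    and "integral_numeration_system \<gamma> D"
    and "r \<ge> 2" and "D \<subseteq> D_gamma r \<gamma>"
    and "n \<ge> 1" and "z \<in> gauss_ints" and "cmod z \<le> r * cmod \<gamma> ^ n"
  shows "\<exists>w. length w = n \<and> set w \<subseteq> D_gamma r \<gamma> \<and> word_val \<gamma> w = z"
  using main[OF assms(1,2,4,6)] assms(7,8) by blast

end
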